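(* For any $x\in S\cap\mathbb{R}^n$, either there exists $x'\in S\cap\mathbb{R}^n$ such that $f(x')\le f(x)$ and the tangent digraph $\mathcal{G}(x')$ is connected, or $f$ is not bounded below on $S$.
   Context: $\mathbb{R}_{\max}=\mathbb{R}\cup\{-\infty\}$. Data: $A^\pm=(a^\pm_{i,j})\in\mathbb{R}_{\max}^{m\times n}$, $C=(c_{k,j})\in\mathbb{R}_{\max}^{p\times n}$, $\mu^+\in\mathbb{Z}_{\ge0}^p$, $\mu^-\in\mathbb{Z}_{\ge0}^n$; $A=(a_{i,j})$, $a_{i,j}=\max(a^+_{i,j},a^-_{i,j})$. $f(x)=\sum_k\mu^+_k\max_j(c_{k,j}+x_j)-\sum_j\mu^-_jx_j$; $S=\{x:\max_j(a^+_{i,j}+x_j)\ge\max_j(a^-_{i,j}+x_j)\ \forall i\in[m]\}$. Standing assumptions: each row of $A$ and $C$ has a finite entry; $\sum_k\mu^+_k=\sum_j\mu^-_j$; the undirected graph on $\{u_1..u_p\}\cup[n]\cup\{w_1..w_m\}$ with edges $\{u_k,j\}$ ($c_{k,j}\ne-\infty$) and $\{w_i,j\}$ ($a_{i,j}\ne-\infty$) is connected. The tangent digraph $\mathcal{G}(x)$ has vertices $U=\{u_1..u_p\}$, $V=[n]$, $W=\{w_1..w_m\}$ and edges $E_1(x)=\{(u_k,j):\max_{j'}(c_{k,j'}+x_{j'})=c_{k,j}+x_j\}$, $E_2(x)=\{(w_i,j):\max_{j'}(a_{i,j'}+x_{j'})=a^-_{i,j}+x_j\}$, $E_3(x)=\{(j,w_i):\max_{j'}(a_{i,j'}+x_{j'})=a^+_{i,j}+x_j\}$;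 connectedness refers to its underlying undirected graph. *)

theory Defs
  imports Complex_Main "HOL-Library.Extended_Real"
begin

text \<open>Tropical (max-plus) semiring R_max is modelled by ereal with entries different
from +infinity; -infinity is the tropical zero. Indices are 0-based:
rows i < m of A, rows k < p of C, columns j < n. A vector of R^n is a
function nat => real of which only the components j < n matter.\<close>

definition rowmax :: "nat \<Rightarrow> (nat \<Rightarrow> ereal) \<Rightarrow> (nat \<Rightarrow> real) \<Rightarrow> ereal" where
  "rowmax n r x = (SUP j\<in>{..<n}. r j + ereal (x j))"

definition Amax :: "(nat \<Rightarrow> nat \<Rightarrow> ereal) \<Rightarrow> (nat \<Rightarrow> nat \<Rightarrow> ereal) \<Rightarrow> nat \<Rightarrow> nat \<Rightarrow> ereal" where
  "Amax Ap Am i j = max (Ap i j) (Am i j)"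

definition in_S :: "nat \<Rightarrow> nat \<Rightarrow> (nat \<Rightarrow> nat \<Rightarrow> ereal) \<Rightarrow> (nat \<Rightarrow> nat \<Rightarrow> ereal)
    \<Rightarrow> (nat \<Rightarrow> real) \<Rightarrow> bool" where
  "in_S m n Ap Am x = (\<forall>i<m. rowmax n (Ap i) x \<ge> rowmax n (Am i) x)"

definition fobj :: "nat \<Rightarrow> nat \<Rightarrow> (nat \<Rightarrow> nat \<Rightarrow> ereal) \<Rightarrow> (nat \<Rightarrow> nat) \<Rightarrow> (nat \<Rightarrow> nat)
    \<Rightarrow> (nat \<Rightarrow> real) \<Rightarrow> ereal" where
  "fobj n p C mup mum x =
     (\<Sum>k<p. ereal (real (mup k)) * rowmax n (C k) x) - ereal (\<Sum>j<n. real (mum j) * x j)"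

datatype vertex = U nat | V nat | W nat

definition vset :: "nat \<Rightarrow> nat \<Rightarrow> nat \<Rightarrow> vertex set" where
  "vset m n p = {U k | k. k < p} \<union> {V j | j. j < n} \<union> {W i | i. i < m}"

definition ug_connected :: "vertex set \<Rightarrow> (vertex \<times> vertex) set \<Rightarrow> bool" where
  "ug_connected Vs E = (\<forall>a\<in>Vs. \<forall>b\<in>Vs. (a, b) \<in> (E \<union> E\<inverse>)\<^sup>*)"

definition sparsity_edges :: "nat \<Rightarrow> nat \<Rightarrow> nat \<Rightarrow> (nat \<Rightarrow> nat \<Rightarrow> ereal) \<Rightarrow> (nat \<Rightarrow> nat \<Rightarrow> ereal)
    \<Rightarrow> (nat \<Rightarrow> nat \<Rightarrow> ereal) \<Rightarrow> (vertex \<times> vertex) set" where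
  "sparsity_edges m n p Ap Am C =
     {(U k, V j) | k j. k < p \<and> j < n \<and> C k j \<noteq> -\<infinity>} \<union>
     {(W i, V j) | i j. i < m \<and> j < n \<and> Amax Ap Am i j \<noteq> -\<infinity>}"

definition tangent_edges :: "nat \<Rightarrow> nat \<Rightarrow> nat \<Rightarrow> (nat \<Rightarrow> nat \<Rightarrow> ereal) \<Rightarrow> (nat \<Rightarrow> nat \<Rightarrow> ereal)
    \<Rightarrow> (nat \<Rightarrow> nat \<Rightarrow> ereal) \<Rightarrow> (nat \<Rightarrow> real) \<Rightarrow> (vertex \<times> vertex) set" where
  "tangent_edges m n p Ap Am C x =
     {(U k, V j) | k j. k < p \<and> j < n \<and> rowmax n (C k) x = C k j + ereal (x j)} \<union>
     {(W i, V j) | i j. i < m \<and> j < n \<and> rowmax n (Amax Ap Am i) x = Am i j + ereal (x j)} \<union>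
     {(V j, W i) | i j. i < m \<and> j < n \<and> rowmax n (Amax Ap Am i) x = Ap i j + ereal (x j)}"

end

theory Submission
  imports Defs
begin

lemma rowmax_ge: "j < n \<Longrightarrow> r j + ereal (x j) \<le> rowmax n r x"
  unfolding rowmax_def by (rule SUP_upper) auto

lemma rowmax_le: "(\<And>j. j < n \<Longrightarrow> r j + ereal (x j) \<le> M) \<Longrightarrow> rowmax n r x \<le> M"
  unfolding rowmax_def by (rule SUP_least) auto

lemma rowmax_att: assumes "0 < n" shows "\<exists>j<n. rowmax n r x = r j + ereal (x j)"
proof -
  have "Max ((\<lambda>j. r j + ereal (x j)) ` {..<n}) \<in> (\<lambda>j. r j + ereal (x j)) ` {..<n}"
    using assms by (intro Max_in) auto
  moreover have "Max ((\<lambda>j. r j + ereal (x j)) ` {..<n}) = rowmax n r x"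
    unfolding rowmax_def using assms by (subst Max_Sup) auto
  ultimately show ?thesis by auto
qed

lemma rowmax_fin:
  assumes "\<forall>j<n. r j \<noteq> \<infinity>" "\<exists>j<n. r j \<noteq> -\<infinity>"
  shows "\<exists>R. rowmax n r x = ereal R"
proof -
  from assms(2) obtain j1 where j1: "j1 < n" "r j1 \<noteq> -\<infinity>" by auto
  then obtain j0 where j0: "j0 < n" "rowmax n r x = r j0 + ereal (x j0)" using rowmax_att[of n r x] by auto
  have "rowmax n r x \<noteq> \<infinity>" using j0 assms(1) by auto
  moreover have "r j1 + ereal (x j1) \<le> rowmax n r x" using rowmax_ge j1 by auto
  hence "rowmax n r x \<noteq> -\<infinity>" using j1 by auto
  ultimately show ?thesis by (cases "rowmax n r x") auto
qed

lemma row_shift_in: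
  assumes fin: "\<forall>j<n. r j \<noteq> \<infinity>" and ex: "\<exists>j<n. r j \<noteq> -\<infinity>"
    and argJ: "\<forall>j<n. r j + ereal (x j) = rowmax n r x \<longrightarrow> j \<in> J"
    and t: "t \<ge> 0" and x': "x' = (\<lambda>j. if j \<in> J then x j + t else x j)"
  shows "rowmax n r x' = rowmax n r x + ereal t"
    and "\<And>e j. (\<forall>j<n. e j \<le> r j) \<Longrightarrow> j < n \<Longrightarrow>
          (rowmax n r x' = e j + ereal (x' j)) = (rowmax n r x = e j + ereal (x j))"
proof -
  have n: "0 < n" using ex by auto
  obtain R where R: "rowmax n r x = ereal R" using rowmax_fin[OF fin ex] by auto
  have lt: "r j + ereal (x j) < ereal R" if "j < n" "j \<notin> J" for j
    using rowmax_ge[OF that(1), of r x] argJ that R by (auto simp: order.order_iff_strict)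
  obtain j0 where j0: "j0 < n" "rowmax n r x = r j0 + ereal (x j0)" using rowmax_att[OF n] by auto
  have j0J: "j0 \<in> J" using argJ j0 by auto
  show eq: "rowmax n r x' = rowmax n r x + ereal t"
  proof (rule antisym)
    show "rowmax n r x' \<le> rowmax n r x + ereal t"
    proof (rule rowmax_le)
      fix j assume j: "j < n"
      show "r j + ereal (x' j) \<le> rowmax n r x + ereal t"
      proof (cases "j \<in> J")
        case True
        have "r j + ereal (x' j) = (r j + ereal (x j)) + ereal t"
          using True x' by (simp add: add.assoc)
        also have "\<dots> \<le> rowmax n r x + ereal t" using rowmax_ge[OF j] by (intro add_right_mono) auto
        finally show ?thesis .
      next
        case False
        have "r j + ereal (x' j) = r j + ereal (x j)" using False x' by simp
        also have "\<dots> \<le> ereal R" using lt[OF j False] by simp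
        also have "\<dots> \<le> rowmax n r x + ereal t" using R t by simp
        finally show ?thesis .
      qed
    qed
  next
    have "rowmax n r x + ereal t = r j0 + ereal (x' j0)"
      using j0 j0J x' by (simp add: add.assoc)
    also have "\<dots> \<le> rowmax n r x'" by (rule rowmax_ge[OF j0(1)])
    finally show "rowmax n r x + ereal t \<le> rowmax n r x'" .
  qed
  fix e j assume le: "\<forall>j<n. e j \<le> r j" and j: "j < n"
  show "(rowmax n r x' = e j + ereal (x' j)) = (rowmax n r x = e j + ereal (x j))"
  proof (cases "j \<in> J")
    case True
    then show ?thesis using eq R x' by (cases "e j") auto
  next
    case False
    have "e j + ereal (x j) \<le> r j + ereal (x j)" using le j by (intro add_right_mono) auto
    hence "e j + ereal (x j) < ereal R" using lt[OF j False] by auto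
    then show ?thesis using eq R x' t False by (cases "e j") auto
  qed
qed

lemma row_shift_out:
  assumes fin: "\<forall>j<n. r j \<noteq> \<infinity>" and ex: "\<exists>j<n. r j \<noteq> -\<infinity>"
    and argJ: "\<forall>j<n. r j + ereal (x j) = rowmax n r x \<longrightarrow> j \<notin> J"
    and bnd: "\<forall>j<n. j \<in> J \<longrightarrow> r j + ereal (x j + t) \<le> rowmax n r x"
    and x': "x' = (\<lambda>j. if j \<in> J then x j + t else x j)"
  shows "rowmax n r x' = rowmax n r x"
    and "\<And>e j. (\<forall>j<n. e j \<le> r j) \<Longrightarrow> j < n \<Longrightarrow>
          rowmax n r x = e j + ereal (x j) \<Longrightarrow> rowmax n r x' = e j + ereal (x' j)"
proof -
  have n: "0 < n" using ex by auto
  obtain j0 where j0: "j0 < n" "rowmax n r x = r j0 + ereal (x j0)" using rowmax_att[OF n] by auto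
  have j0J: "j0 \<notin> J" using argJ j0 by auto
  show eq: "rowmax n r x' = rowmax n r x"
  proof (rule antisym)
    show "rowmax n r x' \<le> rowmax n r x"
    proof (rule rowmax_le)
      fix j assume j: "j < n"
      show "r j + ereal (x' j) \<le> rowmax n r x"
        using bnd j x' rowmax_ge[OF j, of r x] by (cases "j \<in> J") auto
    qed
  next
    show "rowmax n r x \<le> rowmax n r x'" using j0 j0J x' rowmax_ge[OF j0(1), of r x'] by simp
  qed
  fix e j assume le: "\<forall>j<n. e j \<le> r j" and j: "j < n" and ed: "rowmax n r x = e j + ereal (x j)"
  have "e j + ereal (x j) \<le> r j + ereal (x j)" using le j by (intro add_right_mono) auto
  hence "r j + ereal (x j) = rowmax n r x" using ed rowmax_ge[OF j, of r x] by auto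
  hence "j \<notin> J" using argJ j by auto
  then show "rowmax n r x' = e j + ereal (x' j)" using eq ed x' by simp
qed

definition slope :: "nat \<Rightarrow> nat \<Rightarrow> (nat \<Rightarrow> nat) \<Rightarrow> (nat \<Rightarrow> nat) \<Rightarrow> vertex set \<Rightarrow> real" where
  "slope n p mup mum K = (\<Sum>k<p. if U k \<in> K then real (mup k) else 0) - (\<Sum>j<n. if V j \<in> K then real (mum j) else 0)"

locale tsetup =
  fixes m n p :: nat
    and Ap Am :: "nat \<Rightarrow> nat \<Rightarrow> ereal"
    and C :: "nat \<Rightarrow> nat \<Rightarrow> ereal"
    and mup mum :: "nat \<Rightarrow> nat"
  assumes A_entries: "\<forall>i<m. \<forall>j<n. Ap i j \<noteq> \<infinity> \<and> Am i j \<noteq> \<infinity>"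
    and C_entries: "\<forall>k<p. \<forall>j<n. C k j \<noteq> \<infinity>"
    and A_rows: "\<forall>i<m. \<exists>j<n. Amax Ap Am i j \<noteq> -\<infinity>"
    and C_rows: "\<forall>k<p. \<exists>j<n. C k j \<noteq> -\<infinity>"
    and mu_sum: "(\<Sum>k<p. mup k) = (\<Sum>j<n. mum j)"
    and conn: "ug_connected (vset m n p) (sparsity_edges m n p Ap Am C)"
begin

abbreviation "TE x \<equiv> tangent_edges m n p Ap Am C x"
abbreviation "F x \<equiv> fobj n p C mup mum x"
abbreviation "inS x \<equiv> in_S m n Ap Am x"
abbreviation "Am' i \<equiv> Amax Ap Am i"

lemma Amax_fin: "i < m \<Longrightarrow> \<forall>j<n. Am' i j \<noteq> \<infinity>"
  using A_entries by (auto simp: Amax_def max_def)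

lemma Ap_le: "Ap i j \<le> Am' i j" and Am_le: "Am i j \<le> Am' i j"
  by (auto simp: Amax_def)

lemma TE_U: "(U k, V j) \<in> TE x \<longleftrightarrow> k < p \<and> j < n \<and> rowmax n (C k) x = C k j + ereal (x j)"
  and TE_Wm: "(W i, V j) \<in> TE x \<longleftrightarrow> i < m \<and> j < n \<and> rowmax n (Am' i) x = Am i j + ereal (x j)"
  and TE_Wp: "(V j, W i) \<in> TE x \<longleftrightarrow> i < m \<and> j < n \<and> rowmax n (Am' i) x = Ap i j + ereal (x j)"
  by (auto simp: tangent_edges_def)

lemma TE_mono:
  assumes "\<forall>k<p. \<forall>j<n. rowmax n (C k) y = C k j + ereal (y j) \<longrightarrow> rowmax n (C k) z = C k j + ereal (z j)"
    and "\<forall>i<m. \<forall>j<n. rowmax n (Am' i) y = Am i j + ereal (y j) \<longrightarrow> rowmax n (Am' i) z = Am i j + ereal (z j)"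
    and "\<forall>i<m. \<forall>j<n. rowmax n (Am' i) y = Ap i j + ereal (y j) \<longrightarrow> rowmax n (Am' i) z = Ap i j + ereal (z j)"
  shows "TE y \<subseteq> TE z"
  using assms unfolding tangent_edges_def by auto

lemma inS_iff: "inS x \<longleftrightarrow> (\<forall>i<m. \<exists>j<n. (V j, W i) \<in> TE x)"
proof -
  have "rowmax n (Ap i) x \<ge> rowmax n (Am i) x \<longleftrightarrow> (\<exists>j<n. rowmax n (Am' i) x = Ap i j + ereal (x j))"
    if i: "i < m" for i
  proof
    assume ge: "rowmax n (Ap i) x \<ge> rowmax n (Am i) x"
    have n: "0 < n" using A_rows i by auto
    obtain j where j: "j < n" "rowmax n (Ap i) x = Ap i j + ereal (x j)" using rowmax_att[OF n] by blast
    have "rowmax n (Am' i) x \<le> Ap i j + ereal (x j)"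
    proof (rule rowmax_le)
      fix j' assume j': "j' < n"
      show "Am' i j' + ereal (x j') \<le> Ap i j + ereal (x j)"
      proof (cases "Am i j' \<le> Ap i j'")
        case True
        hence "Am' i j' = Ap i j'" by (simp add: Amax_def max_def)
        then show ?thesis using rowmax_ge[OF j', of "Ap i" x] j by simp
      next
        case False
        hence "Am' i j' = Am i j'" by (simp add: Amax_def not_le max_absorb2 less_imp_le)
        then show ?thesis using rowmax_ge[OF j', of "Am i" x] j ge by simp
      qed
    qed
    moreover have "Ap i j + ereal (x j) \<le> rowmax n (Am' i) x"
      using rowmax_ge[OF j(1), of "Am' i" x] Ap_le[of i j] by (meson add_right_mono order_trans)
    ultimately show "\<exists>j<n. rowmax n (Am' i) x = Ap i j + ereal (x j)" using j by (intro exI[of _ j]) auto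
  next
    assume "\<exists>j<n. rowmax n (Am' i) x = Ap i j + ereal (x j)"
    then obtain j where j: "j < n" "rowmax n (Am' i) x = Ap i j + ereal (x j)" by auto
    have "rowmax n (Am i) x \<le> rowmax n (Am' i) x"
      by (rule rowmax_le) (meson Am_le add_right_mono order_trans rowmax_ge)
    also have "\<dots> \<le> rowmax n (Ap i) x" using j rowmax_ge by auto
    finally show "rowmax n (Ap i) x \<ge> rowmax n (Am i) x" .
  qed
  then show ?thesis unfolding in_S_def TE_Wp by auto
qed

lemma rowC_fin: "k < p \<Longrightarrow> \<exists>R. rowmax n (C k) x = ereal R"
  using rowmax_fin[of n "C k" x] C_entries C_rows by simp

lemma rowA_fin: "i < m \<Longrightarrow> \<exists>R. rowmax n (Am' i) x = ereal R"
  using rowmax_fin[of n "Am' i" x] Amax_fin A_rows by simp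

lemma F_real: "\<exists>v. F x = ereal v"
proof -
  have "(\<Sum>k<p. ereal (real (mup k)) * rowmax n (C k) x) = (\<Sum>k<p. ereal (real (mup k) * real_of_ereal (rowmax n (C k) x)))"
  proof (rule sum.cong)
    fix k assume "k \<in> {..<p}"
    then obtain R where "rowmax n (C k) x = ereal R" using rowC_fin[of k x] by auto
    then show "ereal (real (mup k)) * rowmax n (C k) x = ereal (real (mup k) * real_of_ereal (rowmax n (C k) x))" by simp
  qed simp
  then show ?thesis unfolding fobj_def by simp
qed

lemma F_shift:
  assumes rows: "\<forall>k<p. rowmax n (C k) z = rowmax n (C k) y + ereal (if U k \<in> K then t else 0)"
    and z: "z = (\<lambda>j. if V j \<in> K then y j + t else y j)"
  shows "F z = F y + ereal (t * slope n p mup mum K)"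
proof -
  define R where "R k = real_of_ereal (rowmax n (C k) y)" for k
  have Ry: "rowmax n (C k) y = ereal (R k)" if "k < p" for k
    using rowC_fin[OF that, of y] R_def by auto
  have Rz: "rowmax n (C k) z = ereal (R k + (if U k \<in> K then t else 0))" if "k < p" for k
    using rows Ry that by simp
  have Fy: "F y = ereal ((\<Sum>k<p. real (mup k) * R k) - (\<Sum>j<n. real (mum j) * y j))"
  proof -
    have "(\<Sum>k<p. ereal (real (mup k)) * rowmax n (C k) y) = (\<Sum>k<p. ereal (real (mup k) * R k))"
      by (rule sum.cong) (auto simp: Ry)
    then show ?thesis unfolding fobj_def by simp
  qed
  have Fz: "F z = ereal ((\<Sum>k<p. real (mup k) * (R k + (if U k \<in> K then t else 0))) - (\<Sum>j<n. real (mum j) * z j))"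
  proof -
    have "(\<Sum>k<p. ereal (real (mup k)) * rowmax n (C k) z) = (\<Sum>k<p. ereal (real (mup k) * (R k + (if U k \<in> K then t else 0))))"
      by (rule sum.cong) (auto simp: Rz)
    then show ?thesis unfolding fobj_def by simp
  qed
  have e1: "(\<Sum>k<p. real (mup k) * (R k + (if U k \<in> K then t else 0))) =
      (\<Sum>k<p. real (mup k) * R k) + t * (\<Sum>k<p. if U k \<in> K then real (mup k) else 0)"
  proof -
    have "(\<Sum>k<p. real (mup k) * (R k + (if U k \<in> K then t else 0))) =
        (\<Sum>k<p. real (mup k) * R k + t * (if U k \<in> K then real (mup k) else 0))"
      by (rule sum.cong) (auto simp: algebra_simps)
    also have "\<dots> = (\<Sum>k<p. real (mup k) * R k) + t * (\<Sum>k<p. if U k \<in> K then real (mup k) else 0)"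
      by (simp add: sum.distrib sum_distrib_left)
    finally show ?thesis .
  qed
  have e2: "(\<Sum>j<n. real (mum j) * z j) = (\<Sum>j<n. real (mum j) * y j) + t * (\<Sum>j<n. if V j \<in> K then real (mum j) else 0)"
  proof -
    have "(\<Sum>j<n. real (mum j) * z j) =
        (\<Sum>j<n. real (mum j) * y j + t * (if V j \<in> K then real (mum j) else 0))"
      by (rule sum.cong) (auto simp: z algebra_simps)
    also have "\<dots> = (\<Sum>j<n. real (mum j) * y j) + t * (\<Sum>j<n. if V j \<in> K then real (mum j) else 0)"
      by (simp add: sum.distrib sum_distrib_left)
    finally show ?thesis .
  qed
  show ?thesis unfolding Fy Fz e1 e2 slope_def by (simp add: algebra_simps)
qed

lemma slope_compl: "slope n p mup mum (- K) = - slope n p mup mum K"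
proof -
  have a: "(\<Sum>k<p. if U k \<in> K then real (mup k) else 0) + (\<Sum>k<p. if U k \<in> - K then real (mup k) else 0) = (\<Sum>k<p. real (mup k))"
    by (subst sum.distrib[symmetric]) (rule sum.cong, auto)
  have b: "(\<Sum>j<n. if V j \<in> K then real (mum j) else 0) + (\<Sum>j<n. if V j \<in> - K then real (mum j) else 0) = (\<Sum>j<n. real (mum j))"
    by (subst sum.distrib[symmetric]) (rule sum.cong, auto)
  have c: "(\<Sum>k<p. real (mup k)) = (\<Sum>j<n. real (mum j))"
    using mu_sum by (metis of_nat_sum)
  show ?thesis unfolding slope_def using a b c by linarith
qed

end

context tsetup begin

lemma argmax_A:
  assumes "Am' i j + ereal (y j) = rowmax n (Am' i) y" "i < m" "j < n"
  shows "(W i, V j) \<in> TE y \<or> (V j, W i) \<in> TE y"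
proof (cases "Am i j \<le> Ap i j")
  case True
  hence "Am' i j = Ap i j" by (simp add: Amax_def max_def)
  then show ?thesis using assms by (auto simp: TE_Wp)
next
  case False
  hence "Am' i j = Am i j" by (simp add: Amax_def not_le max_absorb2 less_imp_le)
  then show ?thesis using assms by (auto simp: TE_Wm)
qed

lemma gen_G:
  assumes yS: "inS y"
    and closed: "\<forall>u v. (u, v) \<in> TE y \<longrightarrow> (u \<in> K \<longleftrightarrow> v \<in> K)"
    and xs: "z = (\<lambda>j. if V j \<in> K then y j + t else y j)"
    and t0: "t \<ge> 0"
    and bC: "\<forall>k<p. U k \<notin> K \<longrightarrow> (\<forall>j<n. V j \<in> K \<longrightarrow> C k j + ereal (y j + t) \<le> rowmax n (C k) y)"
    and bA: "\<forall>i<m. W i \<notin> K \<longrightarrow> (\<forall>j<n. V j \<in> K \<longrightarrow> Am' i j + ereal (y j + t) \<le> rowmax n (Am' i) y)"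
  shows "TE y \<subseteq> TE z \<and> inS z \<and> F z = F y + ereal (t * slope n p mup mum K)
        \<and> (\<forall>k<p. U k \<notin> K \<longrightarrow> rowmax n (C k) z = rowmax n (C k) y)
        \<and> (\<forall>i<m. W i \<notin> K \<longrightarrow> rowmax n (Am' i) z = rowmax n (Am' i) y)"
proof -
  have xsJ: "z = (\<lambda>j. if j \<in> {j. V j \<in> K} then y j + t else y j)" by (simp add: xs)
  have Cfin: "\<forall>j<n. C k j \<noteq> \<infinity>" "\<exists>j<n. C k j \<noteq> -\<infinity>" if "k < p" for k
    using C_entries C_rows that by auto
  have Afin: "\<forall>j<n. Am' i j \<noteq> \<infinity>" "\<exists>j<n. Am' i j \<noteq> -\<infinity>" if "i < m" for i
    using Amax_fin A_rows that by auto
  have Cin: "rowmax n (C k) z = rowmax n (C k) y + ereal t \<and>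
     (\<forall>j<n. (rowmax n (C k) z = C k j + ereal (z j)) = (rowmax n (C k) y = C k j + ereal (y j)))"
    if k: "k < p" "U k \<in> K" for k
  proof -
    have argJ: "\<forall>j<n. C k j + ereal (y j) = rowmax n (C k) y \<longrightarrow> j \<in> {j. V j \<in> K}"
    proof (intro allI impI)
      fix j assume j: "j < n" "C k j + ereal (y j) = rowmax n (C k) y"
      hence "(U k, V j) \<in> TE y" using k by (simp add: TE_U)
      thus "j \<in> {j. V j \<in> K}" using closed k by blast
    qed
    show ?thesis using row_shift_in[OF Cfin[OF k(1)] argJ t0 xsJ] by auto
  qed
  have Cout: "rowmax n (C k) z = rowmax n (C k) y \<and>
     (\<forall>j<n. rowmax n (C k) y = C k j + ereal (y j) \<longrightarrow> rowmax n (C k) z = C k j + ereal (z j))"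
    if k: "k < p" "U k \<notin> K" for k
  proof -
    have argJ: "\<forall>j<n. C k j + ereal (y j) = rowmax n (C k) y \<longrightarrow> j \<notin> {j. V j \<in> K}"
    proof (intro allI impI)
      fix j assume j: "j < n" "C k j + ereal (y j) = rowmax n (C k) y"
      hence "(U k, V j) \<in> TE y" using k by (simp add: TE_U)
      thus "j \<notin> {j. V j \<in> K}" using closed k by blast
    qed
    have b: "\<forall>j<n. j \<in> {j. V j \<in> K} \<longrightarrow> C k j + ereal (y j + t) \<le> rowmax n (C k) y"
      using bC k by auto
    show ?thesis using row_shift_out[OF Cfin[OF k(1)] argJ b xsJ] by auto
  qed
  have Ain: "rowmax n (Am' i) z = rowmax n (Am' i) y + ereal t \<and>
     (\<forall>j<n. (rowmax n (Am' i) z = Am i j + ereal (z j)) = (rowmax n (Am' i) y = Am i j + ereal (y j))) \<and>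
     (\<forall>j<n. (rowmax n (Am' i) z = Ap i j + ereal (z j)) = (rowmax n (Am' i) y = Ap i j + ereal (y j)))"
    if i: "i < m" "W i \<in> K" for i
  proof -
    have argJ: "\<forall>j<n. Am' i j + ereal (y j) = rowmax n (Am' i) y \<longrightarrow> j \<in> {j. V j \<in> K}"
      using closed i argmax_A by blast
    note R = row_shift_in[OF Afin[OF i(1)] argJ t0 xsJ]
    show ?thesis using R(1) R(2)[of "Am i"] R(2)[of "Ap i"] Ap_le Am_le by auto
  qed
  have Aout: "rowmax n (Am' i) z = rowmax n (Am' i) y \<and>
     (\<forall>j<n. rowmax n (Am' i) y = Am i j + ereal (y j) \<longrightarrow> rowmax n (Am' i) z = Am i j + ereal (z j)) \<and>
     (\<forall>j<n. rowmax n (Am' i) y = Ap i j + ereal (y j) \<longrightarrow> rowmax n (Am' i) z = Ap i j + ereal (z j))"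
    if i: "i < m" "W i \<notin> K" for i
  proof -
    have argJ: "\<forall>j<n. Am' i j + ereal (y j) = rowmax n (Am' i) y \<longrightarrow> j \<notin> {j. V j \<in> K}"
      using closed i argmax_A by blast
    have b: "\<forall>j<n. j \<in> {j. V j \<in> K} \<longrightarrow> Am' i j + ereal (y j + t) \<le> rowmax n (Am' i) y"
      using bA i by auto
    note R = row_shift_out[OF Afin[OF i(1)] argJ b xsJ]
    show ?thesis using R(1) R(2)[of "Am i"] R(2)[of "Ap i"] Ap_le Am_le by auto
  qed
  have mono: "TE y \<subseteq> TE z"
  proof (rule TE_mono)
    show "\<forall>k<p. \<forall>j<n. rowmax n (C k) y = C k j + ereal (y j) \<longrightarrow> rowmax n (C k) z = C k j + ereal (z j)"
      using Cin Cout by blast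
    show "\<forall>i<m. \<forall>j<n. rowmax n (Am' i) y = Am i j + ereal (y j) \<longrightarrow> rowmax n (Am' i) z = Am i j + ereal (z j)"
      using Ain Aout by blast
    show "\<forall>i<m. \<forall>j<n. rowmax n (Am' i) y = Ap i j + ereal (y j) \<longrightarrow> rowmax n (Am' i) z = Ap i j + ereal (z j)"
      using Ain Aout by blast
  qed
  have zS: "inS z" using yS mono unfolding inS_iff by blast
  have Fz: "F z = F y + ereal (t * slope n p mup mum K)"
  proof (rule F_shift[OF _ xs])
    show "\<forall>k<p. rowmax n (C k) z = rowmax n (C k) y + ereal (if U k \<in> K then t else 0)"
      using Cin Cout by (auto simp: zero_ereal_def[symmetric])
  qed
  show ?thesis using mono zS Fz Cout Aout by blast
qed

end

context tsetup begin

lemma gen_step: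
  assumes yS: "inS y"
    and closed: "\<forall>u v. (u, v) \<in> TE y \<longrightarrow> (u \<in> K \<longleftrightarrow> v \<in> K)"
    and bnd: "\<forall>z. inS z \<longrightarrow> ereal L \<le> F z"
    and sle: "slope n p mup mum K \<le> 0"
    and tie: "slope n p mup mum K < 0 \<or> (\<exists>k<p. \<exists>j<n. U k \<notin> K \<and> V j \<in> K \<and> C k j \<noteq> -\<infinity>)
              \<or> (\<exists>i<m. \<exists>j<n. W i \<notin> K \<and> V j \<in> K \<and> Am' i j \<noteq> -\<infinity>)"
  shows "\<exists>z. inS z \<and> F z \<le> F y \<and> TE y \<subset> TE z"
proof -
  define s where "s = slope n p mup mum K"
  define xs where "xs t = (\<lambda>j. if V j \<in> K then y j + t else y j)" for t
  obtain v where Fy: "F y = ereal v" using F_real by blast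
  show ?thesis
  proof (cases "(\<exists>k<p. \<exists>j<n. U k \<notin> K \<and> V j \<in> K \<and> C k j \<noteq> -\<infinity>)
              \<or> (\<exists>i<m. \<exists>j<n. W i \<notin> K \<and> V j \<in> K \<and> Am' i j \<noteq> -\<infinity>)")
    case False
    hence sneg: "s < 0" using tie s_def by blast
    define t where "t = (\<bar>v - L\<bar> + 1) / (- s)"
    have t0: "t \<ge> 0" using sneg unfolding t_def by (simp add: divide_simps)
    have ts: "t * s = - (\<bar>v - L\<bar> + 1)" using sneg unfolding t_def by (simp add: divide_simps)
    have bC: "\<forall>k<p. U k \<notin> K \<longrightarrow> (\<forall>j<n. V j \<in> K \<longrightarrow> C k j + ereal (y j + t) \<le> rowmax n (C k) y)"
      using False by auto
    have bA: "\<forall>i<m. W i \<notin> K \<longrightarrow> (\<forall>j<n. V j \<in> K \<longrightarrow> Am' i j + ereal (y j + t) \<le> rowmax n (Am' i) y)"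
      using False by auto
    have G: "inS (xs t) \<and> F (xs t) = F y + ereal (t * s)"
      using gen_G[OF yS closed xs_def t0 bC bA] s_def by blast
    hence "ereal L \<le> ereal (v + t * s)" using bnd Fy by auto
    hence "L \<le> v - (\<bar>v - L\<bar> + 1)" using ts by simp
    hence False by linarith
    then show ?thesis ..
  next
    case True
    define SC where "SC = {(k, j). k < p \<and> j < n \<and> U k \<notin> K \<and> V j \<in> K \<and> C k j \<noteq> -\<infinity>}"
    define SA where "SA = {(i, j). i < m \<and> j < n \<and> W i \<notin> K \<and> V j \<in> K \<and> Am' i j \<noteq> -\<infinity>}"
    define dC where "dC = (\<lambda>(k, j). real_of_ereal (rowmax n (C k) y) - real_of_ereal (C k j) - y j)"
    define dA where "dA = (\<lambda>(i, j). real_of_ereal (rowmax n (Am' i) y) - real_of_ereal (Am' i j) - y j)"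
    define D where "D = dC ` SC \<union> dA ` SA"
    have fin: "finite D" unfolding D_def
    proof (intro finite_UnI finite_imageI)
      show "finite SC" by (rule finite_subset[of _ "{..<p} \<times> {..<n}"]) (auto simp: SC_def)
      show "finite SA" by (rule finite_subset[of _ "{..<m} \<times> {..<n}"]) (auto simp: SA_def)
    qed
    have ne: "D \<noteq> {}" using True unfolding D_def SC_def SA_def by auto
    define t where "t = Min D"
    have tD: "t \<in> D" using fin ne t_def by simp
    have tle: "\<And>d. d \<in> D \<Longrightarrow> t \<le> d" using fin t_def by simp
    have keyC: "C k j + ereal (y j + d) = rowmax n (C k) y \<longleftrightarrow> d = dC (k, j)"
      and posC: "dC (k, j) > 0"
      if kj: "(k, j) \<in> SC" for k j d
    proof -
      from kj have k: "k < p" "j < n" "U k \<notin> K" "V j \<in> K" "C k j \<noteq> -\<infinity>" by (auto simp: SC_def)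
      obtain c where c: "C k j = ereal c" using k C_entries by (cases "C k j") auto
      obtain R where R: "rowmax n (C k) y = ereal R" using rowC_fin k by blast
      have "(U k, V j) \<notin> TE y" using closed k by blast
      hence ne: "c + y j \<noteq> R" using k c R by (auto simp: TE_U)
      have "c + y j \<le> R" using rowmax_ge[OF k(2), of "C k" y] c R by simp
      thus "dC (k, j) > 0" using ne c R by (simp add: dC_def)
      show "C k j + ereal (y j + d) = rowmax n (C k) y \<longleftrightarrow> d = dC (k, j)"
        using c R by (auto simp: dC_def)
    qed
    have keyA: "Am' i j + ereal (y j + d) = rowmax n (Am' i) y \<longleftrightarrow> d = dA (i, j)"
      and posA: "dA (i, j) > 0"
      if ij: "(i, j) \<in> SA" for i j d
    proof -
      from ij have i: "i < m" "j < n" "W i \<notin> K" "V j \<in> K" "Am' i j \<noteq> -\<infinity>" by (auto simp: SA_def)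
      obtain c where c: "Am' i j = ereal c" using i Amax_fin by (cases "Am' i j") auto
      obtain R where R: "rowmax n (Am' i) y = ereal R" using rowA_fin i by blast
      have "(W i, V j) \<notin> TE y" "(V j, W i) \<notin> TE y" using closed i by blast+
      hence ne: "c + y j \<noteq> R" using argmax_A[of i j y] i c R by auto
      have "c + y j \<le> R" using rowmax_ge[OF i(2), of "Am' i" y] c R by simp
      thus "dA (i, j) > 0" using ne c R by (simp add: dA_def)
      show "Am' i j + ereal (y j + d) = rowmax n (Am' i) y \<longleftrightarrow> d = dA (i, j)"
        using c R by (auto simp: dA_def)
    qed
    have tpos: "t > 0" using tD posC posA unfolding D_def by auto
    have t0: "t \<ge> 0" using tpos by simp
    have bC: "\<forall>k<p. U k \<notin> K \<longrightarrow> (\<forall>j<n. V j \<in> K \<longrightarrow> C k j + ereal (y j + t) \<le> rowmax n (C k) y)"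
    proof (intro allI impI)
      fix k j assume k: "k < p" "U k \<notin> K" "j < n" "V j \<in> K"
      show "C k j + ereal (y j + t) \<le> rowmax n (C k) y"
      proof (cases "C k j = -\<infinity>")
        case False
        hence kj: "(k, j) \<in> SC" using k by (auto simp: SC_def)
        hence "t \<le> dC (k, j)" using tle unfolding D_def by auto
        hence "C k j + ereal (y j + t) \<le> C k j + ereal (y j + dC (k, j))"
          by (intro add_left_mono) simp
        also have "\<dots> = rowmax n (C k) y" using keyC[OF kj] by simp
        finally show ?thesis .
      qed simp
    qed
    have bA: "\<forall>i<m. W i \<notin> K \<longrightarrow> (\<forall>j<n. V j \<in> K \<longrightarrow> Am' i j + ereal (y j + t) \<le> rowmax n (Am' i) y)"
    proof (intro allI impI)
      fix i j assume i: "i < m" "W i \<notin> K" "j < n" "V j \<in> K"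
      show "Am' i j + ereal (y j + t) \<le> rowmax n (Am' i) y"
      proof (cases "Am' i j = -\<infinity>")
        case False
        hence ij: "(i, j) \<in> SA" using i by (auto simp: SA_def)
        hence "t \<le> dA (i, j)" using tle unfolding D_def by auto
        hence "Am' i j + ereal (y j + t) \<le> Am' i j + ereal (y j + dA (i, j))"
          by (intro add_left_mono) simp
        also have "\<dots> = rowmax n (Am' i) y" using keyA[OF ij] by simp
        finally show ?thesis .
      qed simp
    qed
    have G: "TE y \<subseteq> TE (xs t) \<and> inS (xs t) \<and> F (xs t) = F y + ereal (t * s)
        \<and> (\<forall>k<p. U k \<notin> K \<longrightarrow> rowmax n (C k) (xs t) = rowmax n (C k) y)
        \<and> (\<forall>i<m. W i \<notin> K \<longrightarrow> rowmax n (Am' i) (xs t) = rowmax n (Am' i) y)"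
      using gen_G[OF yS closed xs_def t0 bC bA] s_def by blast
    have Fle: "F (xs t) \<le> F y"
    proof -
      have "t * s \<le> 0" using t0 sle s_def by (simp add: mult_nonneg_nonpos)
      thus ?thesis using G Fy by simp
    qed
    have new: "\<exists>e. e \<in> TE (xs t) \<and> e \<notin> TE y"
    proof -
      from tD consider (c) k j where "(k, j) \<in> SC" "t = dC (k, j)" | (a) i j where "(i, j) \<in> SA" "t = dA (i, j)"
        unfolding D_def by auto
      then show ?thesis
      proof cases
        case c
        hence k: "k < p" "j < n" "U k \<notin> K" "V j \<in> K" by (auto simp: SC_def)
        have "C k j + ereal (xs t j) = rowmax n (C k) (xs t)"
          using keyC[OF c(1), of t] c(2) G k by (simp add: xs_def)
        hence "(U k, V j) \<in> TE (xs t)" using k by (simp add: TE_U)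
        moreover have "(U k, V j) \<notin> TE y" using closed k by blast
        ultimately show ?thesis by blast
      next
        case a
        hence i: "i < m" "j < n" "W i \<notin> K" "V j \<in> K" by (auto simp: SA_def)
        have "Am' i j + ereal (xs t j) = rowmax n (Am' i) (xs t)"
          using keyA[OF a(1), of t] a(2) G i by (simp add: xs_def)
        hence "(W i, V j) \<in> TE (xs t) \<or> (V j, W i) \<in> TE (xs t)" using argmax_A i by blast
        moreover have "(W i, V j) \<notin> TE y" "(V j, W i) \<notin> TE y" using closed i by blast+
        ultimately show ?thesis by blast
      qed
    qed
    show ?thesis using G Fle new by blast
  qed
qed

end

lemma rtrancl_cross:
  assumes "(a, b) \<in> X\<^sup>*" "a \<in> K" "b \<notin> K"
  shows "\<exists>u v. (u, v) \<in> X \<and> u \<in> K \<and> v \<notin> K"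
  using assms
proof (induction rule: rtrancl_induct)
  case base
  then show ?case by simp
next
  case (step c d)
  then show ?case by (cases "c \<in> K") auto
qed

context tsetup begin

lemma step:
  assumes yS: "inS y" and nc: "\<not> ug_connected (vset m n p) (TE y)"
    and bnd: "\<forall>z. inS z \<longrightarrow> ereal L \<le> F z"
  shows "\<exists>z. inS z \<and> F z \<le> F y \<and> TE y \<subset> TE z"
proof -
  obtain a b where ab: "a \<in> vset m n p" "b \<in> vset m n p" "(a, b) \<notin> (TE y \<union> (TE y)\<inverse>)\<^sup>*"
    using nc unfolding ug_connected_def by blast
  define K where "K = {v. (a, v) \<in> (TE y \<union> (TE y)\<inverse>)\<^sup>*}"
  have closedK: "\<forall>u v. (u, v) \<in> TE y \<longrightarrow> (u \<in> K \<longleftrightarrow> v \<in> K)"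
    unfolding K_def by (auto intro: rtrancl_into_rtrancl)
  have closedNK: "\<forall>u v. (u, v) \<in> TE y \<longrightarrow> (u \<in> - K \<longleftrightarrow> v \<in> - K)"
    using closedK by auto
  have aK: "a \<in> K" unfolding K_def by simp
  have bK: "b \<notin> K" using ab(3) unfolding K_def by simp
  have "(a, b) \<in> (sparsity_edges m n p Ap Am C \<union> (sparsity_edges m n p Ap Am C)\<inverse>)\<^sup>*"
    using conn ab unfolding ug_connected_def by blast
  then obtain u v where uv: "(u, v) \<in> sparsity_edges m n p Ap Am C \<union> (sparsity_edges m n p Ap Am C)\<inverse>"
    "u \<in> K" "v \<notin> K"
    using rtrancl_cross[OF _ aK bK] by blast
  have ties: "((\<exists>k<p. \<exists>j<n. U k \<notin> K \<and> V j \<in> K \<and> C k j \<noteq> -\<infinity>)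
              \<or> (\<exists>i<m. \<exists>j<n. W i \<notin> K \<and> V j \<in> K \<and> Am' i j \<noteq> -\<infinity>))
     \<or> ((\<exists>k<p. \<exists>j<n. U k \<notin> - K \<and> V j \<in> - K \<and> C k j \<noteq> -\<infinity>)
              \<or> (\<exists>i<m. \<exists>j<n. W i \<notin> - K \<and> V j \<in> - K \<and> Am' i j \<noteq> -\<infinity>))"
    using uv unfolding sparsity_edges_def by auto
  have sc: "slope n p mup mum (- K) = - slope n p mup mum K" by (rule slope_compl)
  consider "slope n p mup mum K < 0" | "slope n p mup mum K > 0" | "slope n p mup mum K = 0" by linarith
  then show ?thesis
  proof cases
    case 1
    then show ?thesis using gen_step[OF yS closedK bnd] by auto
  next
    case 2
    then show ?thesis using gen_step[OF yS closedNK bnd] sc by auto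
  next
    case 3
    have g1: "slope n p mup mum K \<le> 0" and g2: "slope n p mup mum (- K) \<le> 0" using 3 sc by auto
    show ?thesis using ties gen_step[OF yS closedK bnd g1] gen_step[OF yS closedNK bnd g2] by blast
  qed
qed

end

theorem proposition4p2:
  fixes m n p :: nat
    and Ap Am :: "nat \<Rightarrow> nat \<Rightarrow> ereal"
    and C :: "nat \<Rightarrow> nat \<Rightarrow> ereal"
    and mup mum :: "nat \<Rightarrow> nat"
    and x :: "nat \<Rightarrow> real"
  assumes A_entries: "\<forall>i<m. \<forall>j<n. Ap i j \<noteq> \<infinity> \<and> Am i j \<noteq> \<infinity>"
    and C_entries: "\<forall>k<p. \<forall>j<n. C k j \<noteq> \<infinity>"
    and A_rows: "\<forall>i<m. \<exists>j<n. Amax Ap Am i j \<noteq> -\<infinity>"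
    and C_rows: "\<forall>k<p. \<exists>j<n. C k j \<noteq> -\<infinity>"
    and mu_sum: "(\<Sum>k<p. mup k) = (\<Sum>j<n. mum j)"
    and conn: "ug_connected (vset m n p) (sparsity_edges m n p Ap Am C)"
    and xS: "in_S m n Ap Am x"
  shows "(\<exists>x'. in_S m n Ap Am x' \<and> fobj n p C mup mum x' \<le> fobj n p C mup mum x
              \<and> ug_connected (vset m n p) (tangent_edges m n p Ap Am C x'))
         \<or> \<not> (\<exists>L::real. \<forall>y. in_S m n Ap Am y \<longrightarrow> ereal L \<le> fobj n p C mup mum y)"
proof -
  interpret tsetup m n p Ap Am C mup mum
    using A_entries C_entries A_rows C_rows mu_sum conn by (simp add: tsetup_def)
  show ?thesis
  proof (cases "\<exists>L::real. \<forall>y. inS y \<longrightarrow> ereal L \<le> F y")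
    case False
    then show ?thesis by blast
  next
    case True
    then obtain L where bnd: "\<forall>y. inS y \<longrightarrow> ereal L \<le> F y" by blast
    define Univ where "Univ = (U ` {..<p}) \<times> (V ` {..<n}) \<union> (W ` {..<m}) \<times> (V ` {..<n}) \<union> (V ` {..<n}) \<times> (W ` {..<m})"
    have finU: "finite Univ" unfolding Univ_def by simp
    have sub: "TE y \<subseteq> Univ" for y unfolding Univ_def tangent_edges_def by auto
    define P where "P y = (inS y \<and> F y \<le> F x)" for y
    define N where "N = (\<lambda>y. card (TE y)) ` {y. P y}"
    have "N \<subseteq> {..card Univ}" unfolding N_def using card_mono[OF finU sub] by auto
    hence finN: "finite N" using finite_subset by blast
    have neN: "N \<noteq> {}" unfolding N_def P_def using xS by auto
    have "Max N \<in> N" using finN neN by simp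
    then obtain y0 where y0: "P y0" "card (TE y0) = Max N" unfolding N_def by auto
    have "ug_connected (vset m n p) (TE y0)"
    proof (rule ccontr)
      assume "\<not> ug_connected (vset m n p) (TE y0)"
      then obtain z where z: "inS z" "F z \<le> F y0" "TE y0 \<subset> TE z"
        using step[of y0 L] y0(1) bnd unfolding P_def by blast
      have Pz: "P z" using z y0(1) unfolding P_def by (meson order_trans)
      have "card (TE y0) < card (TE z)"
        using psubset_card_mono[OF finite_subset[OF sub finU] z(3)] .
      moreover have "card (TE z) \<le> Max N" using Pz finN unfolding N_def by auto
      ultimately show False using y0(2) by simp
    qed
    then show ?thesis using y0(1) unfolding P_def by blast
  qed
qed

end
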